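(* Let $S\subseteq\mathbb{Z}^2$. (a) If $S$ is connected, then $R(S)$ is connected or empty. (b) If $E$ is a connected subset of $R(S)$, then $S\cap Q(E)$ is connected.
   Context: The graph $\mathbf{G}$ on $\mathbb{Z}^2$ joins each point $p$ to $p\pm(1,0)$, $p\pm(0,1)$, $p+(-1,1)$, $p+(1,-1)$; a set is connected if it is connected in the subgraph of $\mathbf{G}$ it induces. For $p\in\mathbb{Z}^2$, $Q(p)=\{p,\ p+(1,0),\ p+(0,1)\}$, and $Q(E)=\bigcup_{a\in E}Q(a)$. $R(S)$ is the set of $p$ such that $S$ contains at least two points of $Q(p)$ (Toom's north-east-self majority rule applied to the configuration whose set of $1$'s is $S$). *)

theory Defs
  imports Main
begin

type_synonym pt = "int \<times> int"

definition adjG :: "pt \<Rightarrow> pt \<Rightarrow> bool" where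
  "adjG p q \<longleftrightarrow> (let d = (fst q - fst p, snd q - snd p) in
     d \<in> {(1,0), (-1,0), (0,1), (0,-1), (-1,1), (1,-1)})"

definition gconnected :: "pt set \<Rightarrow> bool" where
  "gconnected A \<longleftrightarrow> A \<noteq> {} \<and>
     (\<forall>x\<in>A. \<forall>y\<in>A. (x, y) \<in> {(p, q). p \<in> A \<and> q \<in> A \<and> adjG p q}\<^sup>*)"

definition Q :: "pt \<Rightarrow> pt set" where
  "Q p = {p, (fst p + 1, snd p), (fst p, snd p + 1)}"

definition QS :: "pt set \<Rightarrow> pt set" where
  "QS E = (\<Union>a\<in>E. Q a)"

definition R :: "pt set \<Rightarrow> pt set" where
  "R S = {p. card (S \<inter> Q p) \<ge> 2}"

end

theory Submission
  imports Defs
begin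

lemma adjG_iff: "adjG (a,b) (c,d) \<longleftrightarrow>
  (c-a = 1 \<and> d-b = 0) \<or> (c-a = -1 \<and> d-b = 0) \<or> (c-a = 0 \<and> d-b = 1) \<or> (c-a = 0 \<and> d-b = -1)
   \<or> (c-a = -1 \<and> d-b = 1) \<or> (c-a = 1 \<and> d-b = -1)"
  unfolding adjG_def Let_def by simp
lemma adjG_iff2: "adjG (a,b) (c,d) \<longleftrightarrow>
  (c = a+1 \<and> d = b) \<or> (c = a-1 \<and> d = b) \<or> (c = a \<and> d = b+1) \<or> (c = a \<and> d = b-1)
   \<or> (c = a-1 \<and> d = b+1) \<or> (c = a+1 \<and> d = b-1)"
  unfolding adjG_iff by (rule iffI; elim disjE conjE; simp add: algebra_simps)
lemma Q_iff: "(c,d) \<in> Q (a,b) \<longleftrightarrow> (c = a \<and> d = b) \<or> (c = a+1 \<and> d = b) \<or> (c = a \<and> d = b+1)"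
  unfolding Q_def by simp
lemma L1: "u \<in> Q x \<Longrightarrow> u \<in> Q y \<Longrightarrow> x = y \<or> adjG x y"
proof -
  assume h: "u \<in> Q x" "u \<in> Q y"
  obtain a b where u: "u = (a,b)" by (cases u)
  have "x = (a,b) \<or> x = (a-1,b) \<or> x = (a,b-1)" "y = (a,b) \<or> y = (a-1,b) \<or> y = (a,b-1)"
    using h unfolding u Q_def by (cases x, cases y, auto)+
  thus ?thesis by (elim disjE) (simp_all add: adjG_iff)
qed

lemma L4: "u \<in> Q x \<Longrightarrow> v \<in> Q x \<Longrightarrow> u = v \<or> adjG u v"
proof -
  assume h: "u \<in> Q x" "v \<in> Q x"
  obtain a b where x: "x = (a,b)" by (cases x)
  have "u = (a,b) \<or> u = (a+1,b) \<or> u = (a,b+1)" "v = (a,b) \<or> v = (a+1,b) \<or> v = (a,b+1)"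
    using h unfolding x Q_def by auto
  thus ?thesis by (elim disjE) (simp_all add: adjG_iff)
qed

lemma L2: "adjG a b \<Longrightarrow> \<exists>z. a \<in> Q z \<and> b \<in> Q z"
proof -
  assume h: "adjG a b"
  obtain a1 a2 b1 b2 where ab: "a = (a1,a2)" "b = (b1,b2)" by (cases a, cases b)
  have "(b1 = a1+1 \<and> b2 = a2) \<or> (b1 = a1-1 \<and> b2 = a2) \<or> (b1 = a1 \<and> b2 = a2+1) \<or> (b1 = a1 \<and> b2 = a2-1)
   \<or> (b1 = a1-1 \<and> b2 = a2+1) \<or> (b1 = a1+1 \<and> b2 = a2-1)"
    using h unfolding ab adjG_iff2 .
  thus ?thesis unfolding ab
    apply (elim disjE conjE; hypsubst)
    apply (rule exI[of _ "(a1,a2)"], simp add: Q_iff)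
    apply (rule exI[of _ "(a1-1,a2)"], simp add: Q_iff)
    apply (rule exI[of _ "(a1,a2)"], simp add: Q_iff)
    apply (rule exI[of _ "(a1,a2-1)"], simp add: Q_iff)
    apply (rule exI[of _ "(a1-1,a2)"], simp add: Q_iff)
    apply (rule exI[of _ "(a1,a2-1)"], simp add: Q_iff)
    done
qed

lemma adjG_neq: "adjG a b \<Longrightarrow> a \<noteq> b"
  by (cases a, cases b) (auto simp: adjG_iff)

lemma finQ: "finite (Q x)"
  unfolding Q_def by simp

lemma L3: "a \<in> S \<Longrightarrow> b \<in> S \<Longrightarrow> a \<in> Q z \<Longrightarrow> b \<in> Q z \<Longrightarrow> a \<noteq> b \<Longrightarrow> z \<in> R S"
proof -
  assume h: "a \<in> S" "b \<in> S" "a \<in> Q z" "b \<in> Q z" "a \<noteq> b"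
  have "{a,b} \<subseteq> S \<inter> Q z" using h by auto
  hence "card {a,b} \<le> card (S \<inter> Q z)" by (intro card_mono) (auto simp: finQ)
  thus ?thesis using h unfolding R_def by auto
qed

lemma R_two: assumes "x \<in> R S"
  shows "let (a,b) = x in ((a,b) \<in> S \<and> (a+1,b) \<in> S) \<or> ((a,b) \<in> S \<and> (a,b+1) \<in> S)
     \<or> ((a+1,b) \<in> S \<and> (a,b+1) \<in> S)"
proof -
  obtain a b where x: "x = (a,b)" by (cases x)
  show ?thesis
  proof (rule ccontr)
    assume n: "\<not> ?thesis"
    have "\<exists>w. S \<inter> Q x \<subseteq> {w}" using n unfolding x Q_def by auto
    then obtain w where "S \<inter> Q x \<subseteq> {w}" by blast
    hence "card (S \<inter> Q x) \<le> card {w}" by (intro card_mono) auto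
    thus False using assms unfolding R_def by auto
  qed
qed

lemma R_ne: "x \<in> R S \<Longrightarrow> S \<inter> Q x \<noteq> {}"
  unfolding R_def by (metis card.empty not_numeral_le_zero mem_Collect_eq)

lemma W: "u \<in> S \<Longrightarrow> w \<in> S \<Longrightarrow> u \<in> Q p \<Longrightarrow> w \<in> Q q \<Longrightarrow> u = w \<or> adjG u w \<Longrightarrow>
  \<exists>u w. u \<in> S \<inter> Q p \<and> w \<in> S \<inter> Q q \<and> (u = w \<or> adjG u w)"
  by blast
lemma L5g: assumes A: "((a,b) \<in> S \<and> (a+1,b) \<in> S) \<or> ((a,b) \<in> S \<and> (a,b+1) \<in> S)
     \<or> ((a+1,b) \<in> S \<and> (a,b+1) \<in> S)"
  and B: "((c,d) \<in> S \<and> (c+1,d) \<in> S) \<or> ((c,d) \<in> S \<and> (c,d+1) \<in> S)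
     \<or> ((c+1,d) \<in> S \<and> (c,d+1) \<in> S)"
  and C: "(c = a+1 \<and> d = b) \<or> (c = a-1 \<and> d = b) \<or> (c = a \<and> d = b+1) \<or> (c = a \<and> d = b-1)
   \<or> (c = a-1 \<and> d = b+1) \<or> (c = a+1 \<and> d = b-1)"
  shows "\<exists>u w. u \<in> S \<inter> Q (a,b) \<and> w \<in> S \<inter> Q (c,d) \<and> (u = w \<or> adjG u w)"
  using C A B
  apply (elim disjE conjE; hypsubst)
  apply ((rule W, assumption, assumption, (simp (no_asm) add: Q_iff; fail), (simp (no_asm) add: Q_iff; fail), (simp (no_asm) add: adjG_iff; fail))+)
  done

lemma L5: assumes "p \<in> R S" "q \<in> R S" "adjG p q"
  shows "\<exists>u w. u \<in> S \<inter> Q p \<and> w \<in> S \<inter> Q q \<and> (u = w \<or> adjG u w)"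
proof -
  obtain a b c d where pq: "p = (a,b)" "q = (c,d)" by (cases p, cases q)
  have A: "((a,b) \<in> S \<and> (a+1,b) \<in> S) \<or> ((a,b) \<in> S \<and> (a,b+1) \<in> S)
     \<or> ((a+1,b) \<in> S \<and> (a,b+1) \<in> S)" using R_two[OF assms(1)] pq by simp
  have B: "((c,d) \<in> S \<and> (c+1,d) \<in> S) \<or> ((c,d) \<in> S \<and> (c,d+1) \<in> S)
     \<or> ((c+1,d) \<in> S \<and> (c,d+1) \<in> S)" using R_two[OF assms(2)] pq by simp
  have C: "(c = a+1 \<and> d = b) \<or> (c = a-1 \<and> d = b) \<or> (c = a \<and> d = b+1) \<or> (c = a \<and> d = b-1)
   \<or> (c = a-1 \<and> d = b+1) \<or> (c = a+1 \<and> d = b-1)" using assms(3) unfolding pq adjG_iff2 .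
  show ?thesis unfolding pq by (rule L5g[OF A B C])
qed

definition rel :: "pt set \<Rightarrow> (pt \<times> pt) set" where
  "rel A = {(p, q). p \<in> A \<and> q \<in> A \<and> adjG p q}"

lemma step_or_eq: "x \<in> A \<Longrightarrow> y \<in> A \<Longrightarrow> x = y \<or> adjG x y \<Longrightarrow> (x,y) \<in> (rel A)\<^sup>*"
  unfolding rel_def by auto

lemma partA:
  assumes "(a,b) \<in> (rel S)\<^sup>*"
  shows "\<And>x y. x \<in> R S \<Longrightarrow> y \<in> R S \<Longrightarrow> a \<in> Q x \<Longrightarrow> b \<in> Q y \<Longrightarrow> (x,y) \<in> (rel (R S))\<^sup>*"
  using assms
proof (induction rule: converse_rtrancl_induct)
  case base
  show ?case by (rule step_or_eq[OF base(1,2) L1[OF base(3,4)]])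
next
  case (step a a')
  have aa: "a \<in> S" "a' \<in> S" "adjG a a'" using step(1) unfolding rel_def by auto
  obtain z where z: "a \<in> Q z" "a' \<in> Q z" using L2[OF aa(3)] by blast
  have zR: "z \<in> R S" by (rule L3[OF aa(1,2) z adjG_neq[OF aa(3)]])
  have "(x,z) \<in> (rel (R S))\<^sup>*" using step_or_eq[OF step.prems(1) zR L1[OF step.prems(3) z(1)]] .
  moreover have "(z,y) \<in> (rel (R S))\<^sup>*" using step.IH[OF zR step.prems(2) z(2) step.prems(4)] .
  ultimately show ?case by (meson rtrancl_trans)
qed

lemma QS_mem: "u \<in> Q p \<Longrightarrow> p \<in> E \<Longrightarrow> u \<in> QS E"
  unfolding QS_def by auto

lemma partB:
  assumes "(p,q) \<in> (rel E)\<^sup>*" "E \<subseteq> R S" "q \<in> E"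
  shows "\<And>u v. u \<in> S \<inter> Q p \<Longrightarrow> v \<in> S \<inter> Q q \<Longrightarrow> (u,v) \<in> (rel (S \<inter> QS E))\<^sup>*"
  using assms(1)
proof (induction rule: converse_rtrancl_induct)
  case base
  have "u \<in> S \<inter> QS E" "v \<in> S \<inter> QS E" using QS_mem[OF _ assms(3)] base by auto
  then show ?case using step_or_eq[OF _ _ L4] base by blast
next
  case (step p p')
  hence pp: "p \<in> E" "p' \<in> E" "adjG p p'" unfolding rel_def by auto
  obtain w1 w2 where w: "w1 \<in> S \<inter> Q p" "w2 \<in> S \<inter> Q p'" "w1 = w2 \<or> adjG w1 w2"
    using L5[of p S p'] pp assms(2) by blast
  have m: "u \<in> QS E" "w1 \<in> QS E" "w2 \<in> QS E"
    using QS_mem[OF _ pp(1)] QS_mem[OF _ pp(2)] step.prems(1) w(1,2) by auto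
  have "(u,w1) \<in> (rel (S \<inter> QS E))\<^sup>*"
    using step.prems(1) w(1) m by (intro step_or_eq L4) auto
  moreover have "(w1,w2) \<in> (rel (S \<inter> QS E))\<^sup>*"
    using w m by (intro step_or_eq) auto
  moreover have "(w2,v) \<in> (rel (S \<inter> QS E))\<^sup>*" using step.IH w(2) step.prems(2) by blast
  ultimately show ?case by (meson rtrancl_trans)
qed

theorem fact3p1:
  fixes S :: "pt set"
  shows "(gconnected S \<longrightarrow> gconnected (R S) \<or> R S = {}) \<and>
         (\<forall>E. E \<subseteq> R S \<and> gconnected E \<longrightarrow> gconnected (S \<inter> QS E))"
proof (intro conjI impI allI)
  assume g: "gconnected S"
  show "gconnected (R S) \<or> R S = {}"
  proof (cases "R S = {}")
    case False
    have "\<forall>x\<in>R S. \<forall>y\<in>R S. (x,y) \<in> (rel (R S))\<^sup>*"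
    proof (intro ballI)
      fix x y assume xy: "x \<in> R S" "y \<in> R S"
      obtain a where a: "a \<in> S \<inter> Q x" using R_ne[OF xy(1)] by blast
      obtain b where b: "b \<in> S \<inter> Q y" using R_ne[OF xy(2)] by blast
      have "(a,b) \<in> (rel S)\<^sup>*" using g a b unfolding gconnected_def rel_def by blast
      thus "(x,y) \<in> (rel (R S))\<^sup>*" using partA[of a b S x y] xy a b by blast
    qed
    thus ?thesis using False unfolding gconnected_def rel_def by blast
  qed simp
next
  fix E assume h: "E \<subseteq> R S \<and> gconnected E"
  then obtain p where p: "p \<in> E" unfolding gconnected_def by blast
  then obtain u where "u \<in> S \<inter> Q p" using R_ne h by blast
  hence ne: "S \<inter> QS E \<noteq> {}" using p QS_mem by blast
  have "\<forall>x\<in>S \<inter> QS E. \<forall>y\<in>S \<inter> QS E. (x,y) \<in> (rel (S \<inter> QS E))\<^sup>*"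
  proof (intro ballI)
    fix x y assume xy: "x \<in> S \<inter> QS E" "y \<in> S \<inter> QS E"
    obtain p where p: "p \<in> E" "x \<in> Q p" using xy(1) unfolding QS_def by blast
    obtain q where q: "q \<in> E" "y \<in> Q q" using xy(2) unfolding QS_def by blast
    have "(p,q) \<in> (rel E)\<^sup>*" using h p q unfolding gconnected_def rel_def by blast
    thus "(x,y) \<in> (rel (S \<inter> QS E))\<^sup>*" using partB[of p q E S x y] h xy p q by blast
  qed
  thus "gconnected (S \<inter> QS E)" using ne unfolding gconnected_def rel_def by blast
qed

end
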